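(* There exist an instance domain $\mathcal{X}$ and a hypothesis class $\mathcal{H}$ consisting of a single hypothesis such that the following holds for all integers $k,l\ge0$: if $k<l$, then for any $a\ge 0$ there exists a strategy of the adversary, all of whose presented sequences satisfy the $l$-bias assumption with respect to $\mathcal{H}$, such that any algorithm guaranteeing a cumulative mistake penalty of at most $k$ in the randomized prediction model must have cumulative abstention penalty at least $a$.
   Context: Randomized prediction model: at round $t$ the adversary presents $x_t\in\mathcal{X}$; the learner outputs $(p_{t,-},p_{t,+},1-p_{t,-}-p_{t,+})$ with $p_{t,-},p_{t,+}\ge0$, $p_{t,-}+p_{t,+}\le 1$ (probabilities of predicting $-1$, $+1$, abstaining); the adversary reveals $y_t\in\{-1,+1\}$. After $n$ rounds the cumulative mistake penalty is $\sum_{t=1}^n \big(I(y_t=-1)p_{t,+}+I(y_t=+1)p_{t,-}\big)$ and the cumulative abstention penalty is $\sum_{t=1}^n(1-p_{t,+}-p_{t,-})$. Hypotheses are maps $\mathcal{X}\to\{-1,+1\}$. $\mathcal{C}^l$ is the class of functions $x\mapsto 1-2I(x\in D)$ for $D\subseteq\mathcal{X}$, $|D|\le l$, and $\mathcal{H}^l=\{x\mapsto h(x)c(x): h\in\mathcal{H},c\in\mathcal{C}^l\}$. A sequence $(x_1,y_1),\dots,(x_n,y_n)$ satisfies the $l$-bias assumption w.r.t. $\mathcal{H}$ if some $h\in\mathcal{H}^l$ has $h(x_t)=y_t$ for all $t$. An algorithm guarantees cumulative mistake penalty at most $k$ if this holds on every admissible sequence. *)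

theory Defs
  imports Complex_Main
begin

text \<open>Labels and hypothesis values are integers in {-1, +1}.
  A learner (deterministic algorithm in the randomized prediction model) maps the history of
  revealed (instance, label) pairs and the current instance to the pair
  (p_minus, p_plus) of probabilities of predicting -1 and +1; the rest is the abstention
  probability.\<close>

type_synonym 'x learner = "('x \<times> int) list \<Rightarrow> 'x \<Rightarrow> real \<times> real"

definition valid_learner :: "'x learner \<Rightarrow> bool" where
  "valid_learner A \<longleftrightarrow>
     (\<forall>hist x. 0 \<le> fst (A hist x) \<and> 0 \<le> snd (A hist x) \<and> fst (A hist x) + snd (A hist x) \<le> 1)"

definition mistake_penalty :: "'x learner \<Rightarrow> ('x \<times> int) list \<Rightarrow> real" where
  "mistake_penalty A s =
     (\<Sum>t<length s. (let x = fst (s ! t); y = snd (s ! t); p = A (take t s) x in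
        (if y = -1 then 1 else 0) * snd p + (if y = 1 then 1 else 0) * fst p))"

definition abstention_penalty :: "'x learner \<Rightarrow> ('x \<times> int) list \<Rightarrow> real" where
  "abstention_penalty A s =
     (\<Sum>t<length s. (let x = fst (s ! t); p = A (take t s) x in 1 - snd p - fst p))"

definition Cl :: "'x set \<Rightarrow> nat \<Rightarrow> ('x \<Rightarrow> int) set" where
  "Cl X l = {c. \<exists>D. D \<subseteq> X \<and> finite D \<and> card D \<le> l \<and> c = (\<lambda>x. 1 - 2 * (if x \<in> D then 1 else 0))}"

definition Hl :: "'x set \<Rightarrow> ('x \<Rightarrow> int) set \<Rightarrow> nat \<Rightarrow> ('x \<Rightarrow> int) set" where
  "Hl X H l = {g. \<exists>h\<in>H. \<exists>c\<in>Cl X l. g = (\<lambda>x. h x * c x)}"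

definition l_bias :: "'x set \<Rightarrow> ('x \<Rightarrow> int) set \<Rightarrow> nat \<Rightarrow> ('x \<times> int) list \<Rightarrow> bool" where
  "l_bias X H l s \<longleftrightarrow>
     (\<forall>(x, y)\<in>set s. x \<in> X \<and> y \<in> {-1, 1}) \<and> (\<exists>g\<in>Hl X H l. \<forall>(x, y)\<in>set s. g x = y)"

definition guarantees_mistakes :: "'x set \<Rightarrow> ('x \<Rightarrow> int) set \<Rightarrow> nat \<Rightarrow> 'x learner \<Rightarrow> real \<Rightarrow> bool" where
  "guarantees_mistakes X H l A k \<longleftrightarrow> (\<forall>s. l_bias X H l s \<longrightarrow> mistake_penalty A s \<le> k)"

text \<open>Adaptive deterministic adversary: chooses the next instance from the full history
  (instances, learner's announced probabilities, labels) and chooses the label after seeing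
  the learner's current probabilities.\<close>

type_synonym 'x transcript = "('x \<times> (real \<times> real) \<times> int) list"

definition strip :: "'x transcript \<Rightarrow> ('x \<times> int) list" where
  "strip tr = map (\<lambda>(x, p, y). (x, y)) tr"

fun play :: "('x transcript \<Rightarrow> 'x) \<Rightarrow> ('x transcript \<Rightarrow> 'x \<Rightarrow> real \<times> real \<Rightarrow> int)
              \<Rightarrow> 'x learner \<Rightarrow> nat \<Rightarrow> 'x transcript" where
  "play ax ay A 0 = []"
| "play ax ay A (Suc n) =
     (let tr = play ax ay A n; x = ax tr; p = A (strip tr) x; y = ay tr x p in tr @ [(x, p, y)])"

end

theory Submission
  imports Defs
begin

lemma sum_snoc_take:
  "(\<Sum>t<length (s@[e]). F (take t (s@[e])) ((s@[e])!t)) = (\<Sum>t<length s. F (take t s) (s!t)) + F s e"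
proof -
  have "(\<Sum>t<length s. F (take t (s@[e])) ((s@[e])!t)) = (\<Sum>t<length s. F (take t s) (s!t))"
    by (rule sum.cong) (auto simp: nth_append)
  then show ?thesis by simp
qed

lemma mistake_snoc:
  "mistake_penalty A (s @ [(x,y)]) = mistake_penalty A s +
     ((if y = -1 then 1 else 0) * snd (A s x) + (if y = 1 then 1 else 0) * fst (A s x))"
  unfolding mistake_penalty_def
  using sum_snoc_take[of "\<lambda>h e. (let x = fst e; y = snd e; p = A h x in
        (if y = -1 then 1 else 0) * snd p + (if y = 1 then 1 else 0) * fst p)" s "(x,y)"]
  by (simp add: Let_def)

lemma abst_snoc:
  "abstention_penalty A (s @ [(x,y)]) = abstention_penalty A s + (1 - snd (A s x) - fst (A s x))"
  unfolding abstention_penalty_def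
  using sum_snoc_take[of "\<lambda>h e. (let x = fst e; p = A h x in 1 - snd p - fst p)" s "(x,y)"]
  by (simp add: Let_def)

definition cntneg :: "(nat \<times> int) list \<Rightarrow> nat" where
  "cntneg s = length (filter (\<lambda>e. snd e = -1) s)"

definition advy :: "nat \<Rightarrow> real \<Rightarrow> nat transcript \<Rightarrow> nat \<Rightarrow> real \<times> real \<Rightarrow> int" where
  "advy l \<epsilon> tr x p = (if cntneg (strip tr) < l \<and> \<epsilon> \<le> snd p then -1 else 1)"

abbreviation advx :: "nat transcript \<Rightarrow> nat" where "advx tr \<equiv> length tr"

lemma strip_play_Suc:
  "strip (play ax ay A (Suc n)) = strip (play ax ay A n) @
     [(ax (play ax ay A n), ay (play ax ay A n) (ax (play ax ay A n)) (A (strip (play ax ay A n)) (ax (play ax ay A n))))]"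
  by (simp add: strip_def Let_def)

lemma len_play: "length (play ax ay A n) = n"
  by (induction n) (simp_all add: Let_def)

lemma len_strip[simp]: "length (strip tr) = length tr"
  by (simp add: strip_def)

lemma fst_strip_play: "map fst (strip (play advx ay A n)) = [0..<n]"
proof (induction n)
  case 0 then show ?case by (simp add: strip_def)
next
  case (Suc n)
  show ?case unfolding strip_play_Suc using Suc by (simp add: len_play)
qed

lemma advy_range[simp]: "advy l \<epsilon> tr x p = -1 \<or> advy l \<epsilon> tr x p = 1"
  by (simp add: advy_def)

lemma labels_play: "\<forall>e\<in>set (strip (play advx (advy l \<epsilon>) A n)). snd e \<in> {-1, 1}"
proof (induction n)
  case 0 then show ?case by (simp add: strip_def)
next
  case (Suc n)
  show ?case unfolding strip_play_Suc using Suc by auto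
qed

lemma cnt_play: "cntneg (strip (play advx (advy l \<epsilon>) A n)) \<le> l"
proof (induction n)
  case 0 then show ?case by (simp add: strip_def cntneg_def)
next
  case (Suc n)
  define s where "s = strip (play advx (advy l \<epsilon>) A n)"
  define tr where "tr = play advx (advy l \<epsilon>) A n"
  have s: "s = strip tr" by (simp add: s_def tr_def)
  have "cntneg (s @ [(x, advy l \<epsilon> tr x p)]) \<le> l" for x p
    using Suc unfolding s_def[symmetric] by (auto simp: advy_def cntneg_def s)
  then show ?case unfolding strip_play_Suc s_def tr_def .
qed

lemma inv_play:
  assumes v: "valid_learner A" and e0: "0 \<le> \<epsilon>"
  shows "mistake_penalty A (strip (play advx (advy l \<epsilon>) A n)) \<ge> \<epsilon> * cntneg (strip (play advx (advy l \<epsilon>) A n))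
    \<and> (cntneg (strip (play advx (advy l \<epsilon>) A n)) < l \<longrightarrow>
       abstention_penalty A (strip (play advx (advy l \<epsilon>) A n)) + mistake_penalty A (strip (play advx (advy l \<epsilon>) A n))
        \<ge> (1 - \<epsilon>) * (real n - cntneg (strip (play advx (advy l \<epsilon>) A n))))"
proof (induction n)
  case 0 then show ?case by (simp add: strip_def cntneg_def mistake_penalty_def abstention_penalty_def)
next
  case (Suc n)
  define s where "s = strip (play advx (advy l \<epsilon>) A n)"
  define x where "x = length (play advx (advy l \<epsilon>) A n)"
  define p where "p = A s x"
  have p: "0 \<le> fst p" "0 \<le> snd p" "fst p + snd p \<le> 1" using v unfolding valid_learner_def p_def by auto
  have IH: "mistake_penalty A s \<ge> \<epsilon> * cntneg s"
    "cntneg s < l \<longrightarrow> abstention_penalty A s + mistake_penalty A s \<ge> (1 - \<epsilon>) * (real n - cntneg s)"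
    using Suc unfolding s_def by auto
  have ss: "strip (play advx (advy l \<epsilon>) A (Suc n)) = s @ [(x, advy l \<epsilon> (play advx (advy l \<epsilon>) A n) x p)]"
    unfolding strip_play_Suc s_def x_def p_def by simp
  show ?case
  proof (cases "cntneg s < l \<and> \<epsilon> \<le> snd p")
    case True
    then have y: "advy l \<epsilon> (play advx (advy l \<epsilon>) A n) x p = -1" by (simp add: advy_def s_def)
    have c: "cntneg (s @ [(x,-1)]) = cntneg s + 1" by (simp add: cntneg_def)
    show ?thesis unfolding ss y mistake_snoc abst_snoc c
      using IH True p by (auto simp: p_def algebra_simps)
  next
    case False
    then have y: "advy l \<epsilon> (play advx (advy l \<epsilon>) A n) x p = 1" by (auto simp: advy_def s_def)
    have c: "cntneg (s @ [(x,1)]) = cntneg s" by (simp add: cntneg_def)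
    have cl: "cntneg s \<le> n"
    proof -
      have "cntneg s \<le> length s" unfolding cntneg_def by simp
      then show ?thesis by (simp add: s_def len_play)
    qed
    have A1: "\<epsilon> * cntneg s \<le> mistake_penalty A s + fst p" using IH p by linarith
    have A2: "cntneg s < l \<longrightarrow> (1 - \<epsilon>) * (real (Suc n) - cntneg s) \<le>
        abstention_penalty A s + (1 - snd p - fst p) + (mistake_penalty A s + fst p)"
    proof
      assume h: "cntneg s < l"
      then have "snd p < \<epsilon>" using False by auto
      moreover have "(1 - \<epsilon>) * (real (Suc n) - cntneg s) = (1 - \<epsilon>) * (real n - cntneg s) + (1 - \<epsilon>)"
        using cl by (simp add: algebra_simps)
      ultimately show "(1 - \<epsilon>) * (real (Suc n) - cntneg s) \<le>
        abstention_penalty A s + (1 - snd p - fst p) + (mistake_penalty A s + fst p)"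
        using IH h by linarith
    qed
    show ?thesis unfolding ss y mistake_snoc abst_snoc c
      using A1 A2 by (simp add: p_def)
  qed
qed

theorem mainTheorem3:
  shows "\<exists>(X :: nat set) (h :: nat \<Rightarrow> int). (\<forall>x\<in>X. h x \<in> {-1, 1}) \<and>
     (\<forall>k l :: nat. k < l \<longrightarrow>
        (\<forall>a :: real. 0 \<le> a \<longrightarrow>
           (\<exists>(n :: nat) ax ay.
              (\<forall>A. valid_learner A \<longrightarrow> l_bias X {h} l (strip (play ax ay A n))) \<and>
              (\<forall>A. valid_learner A \<and> guarantees_mistakes X {h} l A (real k) \<longrightarrow>
                   a \<le> abstention_penalty A (strip (play ax ay A n))))))"
proof (rule exI[of _ UNIV], rule exI[of _ "\<lambda>_. 1"], intro conjI allI impI)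
  show "\<forall>x\<in>(UNIV::nat set). (\<lambda>_. 1::int) x \<in> {-1, 1}" by simp
next
  fix k l :: nat and a :: real
  assume kl: "k < l" and a0: "0 \<le> a"
  define \<epsilon> :: real where "\<epsilon> = (real k + real l) / (2 * real l)"
  have lpos: "0 < real l" using kl by simp
  have e0: "0 \<le> \<epsilon>" unfolding \<epsilon>_def using lpos by simp
  have e1: "0 < 1 - \<epsilon>" unfolding \<epsilon>_def using lpos kl by (simp add: field_simps)
  have el: "\<epsilon> * real l > real k" unfolding \<epsilon>_def using lpos kl by (simp add: field_simps)
  define n :: nat where "n = nat \<lceil>(a + real k) / (1 - \<epsilon>)\<rceil> + l"
  have nbig: "(1 - \<epsilon>) * (real n - real l) \<ge> a + real k"
  proof -
    have "real n - real l \<ge> (a + real k) / (1 - \<epsilon>)" unfolding n_def by linarith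
    then have "(1 - \<epsilon>) * (real n - real l) \<ge> (1 - \<epsilon>) * ((a + real k) / (1 - \<epsilon>))"
      using e1 by (intro mult_left_mono) auto
    then show ?thesis using e1 by simp
  qed
  have lb: "l_bias UNIV {\<lambda>_. 1} l (strip (play advx (advy l \<epsilon>) A n))" for A
  proof -
    define s where "s = strip (play advx (advy l \<epsilon>) A n)"
    define D where "D = fst ` set (filter (\<lambda>e. snd e = -1) s)"
    have dist: "distinct (map fst s)" unfolding s_def fst_strip_play by simp
    have cD: "card D \<le> l"
    proof -
      have "card D \<le> card (set (filter (\<lambda>e. snd e = -1) s))" unfolding D_def by (rule card_image_le) simp
      also have "\<dots> \<le> length (filter (\<lambda>e. snd e = -1) s)" by (rule card_length)
      also have "\<dots> \<le> l" using cnt_play[of l \<epsilon> A n] unfolding s_def cntneg_def by simp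
      finally show ?thesis .
    qed
    have fD: "finite D" unfolding D_def by simp
    define c :: "nat \<Rightarrow> int" where "c = (\<lambda>x. 1 - 2 * (if x \<in> D then 1 else 0))"
    have cC: "c \<in> Cl UNIV l" unfolding Cl_def c_def using cD fD by blast
    have gH: "(\<lambda>x. (\<lambda>_. 1::int) x * c x) \<in> Hl UNIV {\<lambda>_. 1} l" unfolding Hl_def using cC by (simp add: bexI[of _ c])
    have lab: "\<forall>e\<in>set s. snd e \<in> {-1, 1}" unfolding s_def by (rule labels_play)
    have cons: "\<forall>(x, y)\<in>set s. (\<lambda>x. (\<lambda>_. 1::int) x * c x) x = y"
    proof (clarify)
      fix x y assume xy: "(x, y) \<in> set s"
      show "1 * c x = y"
      proof (cases "y = -1")
        case True
        then have "x \<in> D" unfolding D_def using xy by force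
        then show ?thesis using True by (simp add: c_def)
      next
        case False
        then have y1: "y = 1" using lab xy by auto
        have "x \<notin> D"
        proof
          assume "x \<in> D"
          then obtain y' where "(x, y') \<in> set s" "y' = -1" unfolding D_def by auto
          then have "y' = y" using eq_key_imp_eq_value[OF dist] xy by blast
          then show False using y1 \<open>y' = -1\<close> by simp
        qed
        then show ?thesis using y1 by (simp add: c_def)
      qed
    qed
    show ?thesis unfolding l_bias_def s_def[symmetric]
      using lab cons gH by fastforce
  qed
  show "\<exists>n (ax :: nat transcript \<Rightarrow> nat) ay.
              (\<forall>A. valid_learner A \<longrightarrow> l_bias UNIV {\<lambda>_. 1} l (strip (play ax ay A n))) \<and>
              (\<forall>A. valid_learner A \<and> guarantees_mistakes UNIV {\<lambda>_. 1} l A (real k) \<longrightarrow>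
                   a \<le> abstention_penalty A (strip (play ax ay A n)))"
  proof (rule exI[of _ n], rule exI[of _ advx], rule exI[of _ "advy l \<epsilon>"], intro conjI allI impI)
    fix A :: "nat learner" assume "valid_learner A"
    show "l_bias UNIV {\<lambda>_. 1} l (strip (play advx (advy l \<epsilon>) A n))" by (rule lb)
  next
    fix A :: "nat learner"
    assume h: "valid_learner A \<and> guarantees_mistakes UNIV {\<lambda>_. 1} l A (real k)"
    define s where "s = strip (play advx (advy l \<epsilon>) A n)"
    have M: "mistake_penalty A s \<le> real k"
      using h lb[of A] unfolding guarantees_mistakes_def s_def by blast
    have I: "mistake_penalty A s \<ge> \<epsilon> * cntneg s"
      "cntneg s < l \<longrightarrow> abstention_penalty A s + mistake_penalty A s \<ge> (1 - \<epsilon>) * (real n - cntneg s)"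
      using inv_play[OF conjunct1[OF h] e0, of l n] unfolding s_def by auto
    have N: "cntneg s < l"
    proof (rule ccontr)
      assume "\<not> cntneg s < l"
      then have "real l \<le> real (cntneg s)" by simp
      then have "\<epsilon> * real l \<le> \<epsilon> * cntneg s" using e0 by (rule mult_left_mono)
      then show False using I(1) M el by linarith
    qed
    have "(1 - \<epsilon>) * (real n - real l) \<le> (1 - \<epsilon>) * (real n - cntneg s)"
      using N e1 by (intro mult_left_mono) auto
    then show "a \<le> abstention_penalty A (strip (play advx (advy l \<epsilon>) A n))"
      using I(2) N M nbig unfolding s_def[symmetric] by linarith
  qed
qed

end
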